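(* Let $a,b,c\in\mathbb{C}$ with $a\neq0$, $c\neq0$, $\Re(b)>0$, $\Re(b+a+c)>0$, $\Re(b+a-c)>0$, $\Re(b-a+c)>0$, $\Re(b-a-c)>0$, and $\frac{a+c}{b},\frac{a-c}{b}\notin\{\pm1,\pm3,\pm5,\dots\}$. Put $\tau_1=\frac12-\frac{a+c}{2b}$, $\tau_2=\frac12-\frac{a-c}{2b}$, $\tau_3=\frac12+\frac{a+c}{2b}$, $\tau_4=\frac12+\frac{a-c}{2b}$, assume $1+\tau_j\notin\mathbb{Z}_0^-$ ($j=1,\dots,4$), and let $Q=(b-a-c)(b+a+c)(b-a+c)(b+a-c)$. Then $$ {}_6F_5\!\left(\begin{matrix}1,\ \frac32,\ \tau_1,\ \tau_2,\ \tau_3,\ \tau_4\\ \frac12,\ 1+\tau_1,\ 1+\tau_2,\ 1+\tau_3,\ 1+\tau_4\end{matrix};\,-1\right) =\frac{\pi Q}{4\,a\,c\,b^{2}}\cdot\frac{\sin\!\big(\frac{a\pi}{2b}\big)\sin\!\big(\frac{c\pi}{2b}\big)}{\cos\!\big(\frac{c\pi}{b}\big)+\cos\!\big(\frac{a\pi}{b}\big)}. $$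
   Context: $\mathbb{Z}_0^-=\{0,-1,-2,\dots\}$. The Pochhammer symbol is $(\lambda)_0=1$, $(\lambda)_n=\lambda(\lambda+1)\cdots(\lambda+n-1)$ for $n\ge1$. The generalized hypergeometric series is ${}_pF_q\!\left(\begin{matrix}\alpha_1,\dots,\alpha_p\\ \beta_1,\dots,\beta_q\end{matrix};z\right)=\sum_{n=0}^\infty\frac{(\alpha_1)_n\cdots(\alpha_p)_n}{(\beta_1)_n\cdots(\beta_q)_n}\frac{z^n}{n!}$ (with no $\beta_j\in\mathbb{Z}_0^-$). *)

theory Defs
  imports "HOL-Analysis.Analysis"
begin

definition hypergeomF :: "complex list \<Rightarrow> complex list \<Rightarrow> complex \<Rightarrow> complex" where
  "hypergeomF as bs z =
     (\<Sum>n. (\<Prod>\<alpha>\<leftarrow>as. pochhammer \<alpha> n) / (\<Prod>\<beta>\<leftarrow>bs. pochhammer \<beta> n) * z ^ n / fact n)"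

end

theory Submission
  imports Defs
begin

lemma digamma_refl:
  fixes z :: complex
  assumes z: "z \<notin> \<int>"
  shows "Digamma (1 - z) - Digamma z = of_real pi * cot (of_real pi * z)"
proof -
  have z1: "z \<notin> \<int>\<^sub>\<le>\<^sub>0" using z nonpos_Ints_subset_Ints by blast
  have "1 - z \<notin> \<int>" using z Ints_diff[of 1 "1 - z"] by auto
  hence z2: "1 - z \<notin> \<int>\<^sub>\<le>\<^sub>0" using nonpos_Ints_subset_Ints by blast
  have s: "sin (of_real pi * z) \<noteq> 0" using z by (subst sin_eq_0) auto
  have d1: "((\<lambda>t. Gamma t * Gamma (1 - t)) has_field_derivative
      (Gamma z * Digamma z * Gamma (1 - z) + Gamma z * (Gamma (1 - z) * Digamma (1 - z) * (- 1)))) (at z)"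
    using z1 z2 by (auto intro!: derivative_eq_intros)
  have d2: "((\<lambda>t. of_real pi / sin (of_real pi * t)) has_field_derivative
      (- (of_real pi * (cos (of_real pi * z) * of_real pi)) / (sin (of_real pi * z))^2)) (at z)"
    using s by (auto intro!: derivative_eq_intros simp: power2_eq_square)
  have eq: "(\<lambda>t::complex. Gamma t * Gamma (1 - t)) = (\<lambda>t::complex. of_real pi / sin (of_real pi * t))"
    by (rule ext) (rule Gamma_reflection_complex)
  have DU: "Gamma z * Digamma z * Gamma (1 - z) + Gamma z * (Gamma (1 - z) * Digamma (1 - z) * (- 1))
     = - (of_real pi * (cos (of_real pi * z) * of_real pi)) / (sin (of_real pi * z))^2"
    using d1 d2 unfolding eq by (rule DERIV_unique)
  hence "(of_real pi / sin (of_real pi * z)) * (Digamma z - Digamma (1 - z))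
     = - (of_real pi * (cos (of_real pi * z) * of_real pi)) / (sin (of_real pi * z))^2"
  proof -
    have "Gamma z * Digamma z * Gamma (1 - z) + Gamma z * (Gamma (1 - z) * Digamma (1 - z) * (- 1))
       = (Gamma z * Gamma (1 - z)) * (Digamma z - Digamma (1 - z))" by (simp add: algebra_simps)
    also have "Gamma z * Gamma (1 - z) = of_real pi / sin (of_real pi * z)" by (rule Gamma_reflection_complex)
    finally show ?thesis using DU by simp
  qed
  hence H: "(of_real pi / sin (of_real pi * z)) * (Digamma z - Digamma (1 - z))
     = (of_real pi / sin (of_real pi * z)) * (- (of_real pi * cos (of_real pi * z) / sin (of_real pi * z)))"
    using s by (simp add: field_simps power2_eq_square)
  have "of_real pi / sin (of_real pi * z) \<noteq> 0" using s by simp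
  with H have "Digamma z - Digamma (1 - z) = - (of_real pi * cos (of_real pi * z) / sin (of_real pi * z))"
    by (rule mult_left_cancel[THEN iffD1, rotated])
  thus ?thesis by (simp add: cot_def algebra_simps)
qed

lemma half2: "((2::complex)/A - 2/B)/2 = 1/A - 1/B"
proof -
  have "(2::complex)/A - 2/B = 2 * (1/A - 1/B)" by (simp add: right_diff_distrib)
  thus ?thesis by simp
qed

lemma g_sums:
  fixes w :: complex
  assumes w: "w \<notin> \<int>"
  shows "(\<lambda>k. 1 / (2 * of_nat k + w) - 1 / (2 * of_nat k + 1 + w))
           sums ((Digamma ((w + 1) / 2) - Digamma (w / 2)) / 2)"
proof -
  have nz1: "w / 2 \<noteq> 0" using w by auto
  have nz2: "(w + 1) / 2 \<noteq> 0"
  proof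
    assume "(w + 1) / 2 = 0" hence "w = -1" by (simp add: field_simps add_eq_0_iff)
    with w show False by simp
  qed
  have S1: "(\<lambda>k. inverse (of_nat (Suc k)) - inverse (w / 2 + of_nat k)) sums (Digamma (w / 2) + euler_mascheroni)"
    using summable_Digamma[OF nz1] by (simp add: Digamma_def summable_sums)
  have S2: "(\<lambda>k. inverse (of_nat (Suc k)) - inverse ((w + 1) / 2 + of_nat k)) sums (Digamma ((w + 1) / 2) + euler_mascheroni)"
    using summable_Digamma[OF nz2] by (simp add: Digamma_def summable_sums)
  have S: "(\<lambda>k. ((inverse (of_nat (Suc k)) - inverse ((w + 1) / 2 + of_nat k))
            - (inverse (of_nat (Suc k)) - inverse (w / 2 + of_nat k))) / 2)
        sums (((Digamma ((w + 1) / 2) + euler_mascheroni) - (Digamma (w / 2) + euler_mascheroni)) / 2)"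
    by (intro sums_divide sums_diff S1 S2)
  show ?thesis
  proof (rule sums_cong[THEN iffD1, OF _ S[simplified]])
    fix k :: nat
    have a: "2 * of_nat k + w \<noteq> 0"
    proof
      assume "2 * of_nat k + w = 0" hence "w = - (2 * of_nat k)" by (simp add: eq_neg_iff_add_eq_0 add_ac)
      with w show False by simp
    qed
    have b: "2 * of_nat k + 1 + w \<noteq> 0"
    proof
      assume "2 * of_nat k + 1 + w = 0" hence "w = - (2 * of_nat k + 1)" by (metis add.commute eq_neg_iff_add_eq_0)
      with w show False by simp
    qed
    show "(inverse (w / 2 + of_nat k) - inverse ((w + 1) / 2 + of_nat k)) / 2
       = 1 / (2 * of_nat k + w) - 1 / (2 * of_nat k + 1 + w)"
    proof -
      have e1: "inverse (w / 2 + of_nat k) = 2 / (2 * of_nat k + w)"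
        using a by (simp add: field_simps inverse_eq_divide)
      have e2: "inverse ((w + 1) / 2 + of_nat k) = 2 / (2 * of_nat k + 1 + w)"
        using b by (simp add: field_simps inverse_eq_divide)
      have "(2 / (2 * of_nat k + w) - 2 / (2 * of_nat k + 1 + w)) / 2
          = 1 / (2 * of_nat k + w) - 1 / (2 * of_nat k + 1 + w)"
        by (rule half2)
      thus ?thesis unfolding e1 e2 .
    qed
  qed
qed

lemma cot_sum_id:
  fixes u :: complex
  assumes su: "sin (of_real pi * u) \<noteq> 0"
  shows "(of_real pi * cot (of_real pi * (u / 2)) + of_real pi * cot (of_real pi * ((1 - u) / 2))) / 2
         = of_real pi / sin (of_real pi * u)"
proof -
  define x where "x = of_real pi * (u / 2)"
  have d: "of_real pi * u = 2 * x" by (simp add: x_def)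
  have sx: "sin (of_real pi * u) = 2 * sin x * cos x" unfolding d by (rule sin_double)
  have s: "sin x \<noteq> 0" and c: "cos x \<noteq> 0" using su sx by auto
  have h: "of_real pi * ((1 - u) / 2) = of_real (pi / 2) - x"
    by (simp add: x_def field_simps)
  have c1: "cos (of_real (pi / 2) - x) = sin x"
    by (simp add: cos_diff sin_of_real[symmetric] cos_of_real[symmetric])
  have s1: "sin (of_real (pi / 2) - x) = cos x"
    by (simp add: sin_diff sin_of_real[symmetric] cos_of_real[symmetric])
  have pyth: "sin x ^ 2 + cos x ^ 2 = 1" by (rule sin_cos_squared_add)
  have "cot (of_real pi * (u / 2)) + cot (of_real pi * ((1 - u) / 2)) = cos x / sin x + sin x / cos x"
  proof -
    have "cot (of_real pi * (u / 2)) = cos x / sin x" by (simp add: cot_def x_def)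
    moreover have "cot (of_real pi * ((1 - u) / 2)) = sin x / cos x" unfolding h cot_def c1 s1 ..
    ultimately show ?thesis by simp
  qed
  also have "\<dots> = (sin x ^ 2 + cos x ^ 2) / (sin x * cos x)"
    using s c by (simp add: field_simps power2_eq_square)
  also have "\<dots> = 1 / (sin x * cos x)" by (simp add: pyth)
  finally have e: "cot (of_real pi * (u / 2)) + cot (of_real pi * ((1 - u) / 2)) = 1 / (sin x * cos x)" .
  have "(of_real pi * cot (of_real pi * (u / 2)) + of_real pi * cot (of_real pi * ((1 - u) / 2))) / 2
      = of_real pi * (cot (of_real pi * (u / 2)) + cot (of_real pi * ((1 - u) / 2))) / 2"
    by (simp add: algebra_simps)
  also have "\<dots> = of_real pi / (2 * sin x * cos x)" unfolding e using s c by (simp add: field_simps)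
  finally show ?thesis unfolding sx .
qed

lemma half_rearr: "((p::complex) - q)/2 + (r - s)/2 = ((r - q) + (p - s))/2"
  by (simp add: diff_divide_distrib add_divide_distrib)

lemma G_sums:
  fixes u :: complex
  assumes u: "u \<notin> \<int>"
  shows "(\<lambda>k. (1 / (2 * of_nat k + u) - 1 / (2 * of_nat k + 1 + u))
              + (1 / (2 * of_nat k + (1 - u)) - 1 / (2 * of_nat k + 1 + (1 - u))))
         sums (of_real pi / sin (of_real pi * u))"
proof -
  have u1: "1 - u \<notin> \<int>" using u Ints_diff[of 1 "1 - u"] by auto
  have u2: "u / 2 \<notin> \<int>" using u Ints_mult[of 2 "u/2"] by auto
  have u3: "(1 - u) / 2 \<notin> \<int>"
  proof
    assume "(1 - u) / 2 \<in> \<int>"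
    hence "2 * ((1 - u) / 2) \<in> \<int>" by (intro Ints_mult) auto
    moreover have "2 * ((1 - u) / 2) = 1 - u" by simp
    ultimately have "1 - u \<in> \<int>" by (simp only:)
    with u1 show False by simp
  qed
  have su: "sin (of_real pi * u) \<noteq> 0" using u by (subst sin_eq_0) auto
  have S: "(\<lambda>k. (1 / (2 * of_nat k + u) - 1 / (2 * of_nat k + 1 + u))
              + (1 / (2 * of_nat k + (1 - u)) - 1 / (2 * of_nat k + 1 + (1 - u))))
     sums ((Digamma ((u + 1) / 2) - Digamma (u / 2)) / 2 + (Digamma ((1 - u + 1) / 2) - Digamma ((1 - u) / 2)) / 2)"
    by (intro sums_add g_sums u u1)
  have r1: "Digamma (1 - u / 2) - Digamma (u / 2) = of_real pi * cot (of_real pi * (u / 2))"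
    by (rule digamma_refl[OF u2])
  have r2: "Digamma (1 - (1 - u) / 2) - Digamma ((1 - u) / 2) = of_real pi * cot (of_real pi * ((1 - u) / 2))"
    by (rule digamma_refl[OF u3])
  have a1: "1 - u / 2 = (1 - u + 1) / 2" by (simp add: field_simps)
  have a2: "1 - (1 - u) / 2 = (u + 1) / 2" by (simp add: field_simps)
  have "(Digamma ((u + 1) / 2) - Digamma (u / 2)) / 2 + (Digamma ((1 - u + 1) / 2) - Digamma ((1 - u) / 2)) / 2
     = ((Digamma (1 - u / 2) - Digamma (u / 2)) + (Digamma (1 - (1 - u) / 2) - Digamma ((1 - u) / 2))) / 2"
    unfolding a1 a2 by (rule half_rearr)
  also have "\<dots> = of_real pi / sin (of_real pi * u)"
    unfolding r1 r2 by (rule cot_sum_id[OF su])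
  finally show ?thesis using S by simp
qed

lemma poch_id: "pochhammer (t::complex) n * (t + of_nat n) = t * pochhammer (t + 1) n"
  using pochhammer_rec[of t n] pochhammer_rec'[of t n] by (simp add: mult.commute)

lemma notInt_add_nat: "(t::complex) \<notin> \<int> \<Longrightarrow> t + of_nat n \<noteq> 0"
proof
  assume "t \<notin> \<int>" "t + of_nat n = 0"
  hence "t = - of_nat n" by (simp add: eq_neg_iff_add_eq_0)
  with \<open>t \<notin> \<int>\<close> show False by simp
qed

lemma poch_ratio:
  fixes t :: complex
  assumes t: "t \<notin> \<int>"
  shows "pochhammer t n / pochhammer (1 + t) n = t / (t + of_nat n)"
proof -
  have "pochhammer (1 + t) n \<noteq> 0"
  proof
    assume "pochhammer (1 + t) n = 0"
    then obtain k where "1 + t = - of_nat k" by (auto simp: pochhammer_eq_0_iff)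
    hence "t = - of_nat (Suc k)" by (simp add: algebra_simps eq_neg_iff_add_eq_0)
    with t show False by simp
  qed
  moreover have "t + of_nat n \<noteq> 0" by (rule notInt_add_nat[OF t])
  ultimately show ?thesis using poch_id[of t n] by (simp add: field_simps)
qed

lemma poch_half: "pochhammer (3/2::complex) n / pochhammer (1/2) n = 2 * of_nat n + 1"
proof -
  have nz: "pochhammer (1/2::complex) n \<noteq> 0"
  proof
    assume "pochhammer (1/2::complex) n = 0"
    hence "\<exists>k<n. (1/2::complex) = - of_nat k" by (simp only: pochhammer_eq_0_iff)
    then obtain k where k: "(1/2::complex) = - of_nat k" by blast
    have "Re (1/2::complex) = Re (- of_nat k)" by (rule arg_cong[where f=Re, OF k])
    hence "(1/2::real) = - real k" by simp
    thus False by linarith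
  qed
  have "pochhammer (1/2::complex) n * (1/2 + of_nat n) = 1/2 * pochhammer (3/2) n"
    using poch_id[of "1/2" n] by (simp add: add_ac)
  note H = this
  have "pochhammer (3/2::complex) n = 2 * (1/2 * pochhammer (3/2) n)" by simp
  also have "\<dots> = 2 * (pochhammer (1/2) n * (1/2 + of_nat n))" by (simp only: H)
  also have "\<dots> = pochhammer (1/2) n * (2 * of_nat n + 1)" by (simp add: algebra_simps)
  finally show ?thesis using nz by simp
qed

lemma gen_rearr: "((x1::complex) * (x2 * (x3 * (x4 * (x5 * x6))))) / (y1 * (y2 * (y3 * (y4 * y5)))) * s / f
   = s * (x1 / f) * (x2 / y1) * (x3 / y2) * (x4 / y3) * (x5 / y4) * (x6 / y5)"
  by (simp add: divide_inverse inverse_mult_distrib mult_ac)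

lemma term_eq:
  fixes u v :: complex and n :: nat
  assumes u: "u \<notin> \<int>" and v: "v \<notin> \<int>" and u1: "1 - u \<notin> \<int>" and v1: "1 - v \<notin> \<int>"
  shows "(\<Prod>\<alpha>\<leftarrow>[1, 3/2, u, v, 1 - u, 1 - v]. pochhammer \<alpha> n)
          / (\<Prod>\<beta>\<leftarrow>[1/2, 1 + u, 1 + v, 1 + (1 - u), 1 + (1 - v)]. pochhammer \<beta> n) * (-1) ^ n / fact n
     = (-1) ^ n * (2 * of_nat n + 1) * (u / (u + of_nat n)) * (v / (v + of_nat n))
         * ((1 - u) / ((1 - u) + of_nat n)) * ((1 - v) / ((1 - v) + of_nat n))"
proof -
  have "(\<Prod>\<alpha>\<leftarrow>[1, 3/2, u, v, 1 - u, 1 - v]. pochhammer \<alpha> n)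
          / (\<Prod>\<beta>\<leftarrow>[1/2, 1 + u, 1 + v, 1 + (1 - u), 1 + (1 - v)]. pochhammer \<beta> n) * (-1) ^ n / fact n
     = (-1) ^ n * (pochhammer 1 n / fact n) * (pochhammer (3/2) n / pochhammer (1/2) n)
        * (pochhammer u n / pochhammer (1 + u) n) * (pochhammer v n / pochhammer (1 + v) n)
        * (pochhammer (1 - u) n / pochhammer (1 + (1 - u)) n) * (pochhammer (1 - v) n / pochhammer (1 + (1 - v)) n)"
    unfolding list.map prod_list.Cons prod_list.Nil mult_1_right by (rule gen_rearr)
  also have "\<dots> = (-1) ^ n * (2 * of_nat n + 1) * (u / (u + of_nat n)) * (v / (v + of_nat n))
         * ((1 - u) / ((1 - u) + of_nat n)) * ((1 - v) / ((1 - v) + of_nat n))"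
    by (simp only: poch_ratio[OF u] poch_ratio[OF v] poch_ratio[OF u1] poch_ratio[OF v1] poch_half
        pochhammer_fact[symmetric]) simp
  finally show ?thesis .
qed



lemma inv_add: "(x::complex) \<noteq> 0 \<Longrightarrow> y \<noteq> 0 \<Longrightarrow> 1/x + 1/y = (y + x)/(x*y)"
  by (simp add: field_simps)

lemma pf_eq:
  fixes u v N :: complex
  assumes nz: "u + N \<noteq> 0" "v + N \<noteq> 0" "(1 - u) + N \<noteq> 0" "(1 - v) + N \<noteq> 0"
    and d: "v * (1 - v) - u * (1 - u) \<noteq> 0"
  shows "s * (2 * N + 1) * (u / (u + N)) * (v / (v + N)) * ((1 - u) / ((1 - u) + N)) * ((1 - v) / ((1 - v) + N))
       = (u * (1 - u) * v * (1 - v) / (v * (1 - v) - u * (1 - u))) * s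
          * ((1 / (N + u) + 1 / (N + (1 - u))) - (1 / (N + v) + 1 / (N + (1 - v))))"
proof -
  define p where "p = (u + N) * ((1 - u) + N)"
  define q where "q = (v + N) * ((1 - v) + N)"
  have p: "p \<noteq> 0" and q: "q \<noteq> 0" using nz by (auto simp: p_def q_def)
  have qp: "q - p = v * (1 - v) - u * (1 - u)" by (simp add: p_def q_def algebra_simps)
  have e1: "1 / (N + u) + 1 / (N + (1 - u)) = (2 * N + 1) / p"
  proof -
    have "1 / (N + u) + 1 / (N + (1 - u)) = ((N + (1 - u)) + (N + u)) / ((N + u) * (N + (1 - u)))"
      by (rule inv_add) (use nz in \<open>simp_all add: add_ac\<close>)
    also have "(N + (1 - u)) + (N + u) = 2 * N + 1" by simp
    also have "(N + u) * (N + (1 - u)) = p" by (simp add: p_def add_ac)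
    finally show ?thesis .
  qed
  have e2: "1 / (N + v) + 1 / (N + (1 - v)) = (2 * N + 1) / q"
  proof -
    have "1 / (N + v) + 1 / (N + (1 - v)) = ((N + (1 - v)) + (N + v)) / ((N + v) * (N + (1 - v)))"
      by (rule inv_add) (use nz in \<open>simp_all add: add_ac\<close>)
    also have "(N + (1 - v)) + (N + v) = 2 * N + 1" by simp
    also have "(N + v) * (N + (1 - v)) = q" by (simp add: q_def add_ac)
    finally show ?thesis .
  qed
  have "s * (2 * N + 1) * (u / (u + N)) * (v / (v + N)) * ((1 - u) / ((1 - u) + N)) * ((1 - v) / ((1 - v) + N))
      = s * (2 * N + 1) * (u * (1 - u) * v * (1 - v)) / (p * q)"
    by (simp add: p_def q_def mult_ac)
  also have "\<dots> = (u * (1 - u) * v * (1 - v) / (q - p)) * s * ((2 * N + 1) / p - (2 * N + 1) / q)"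
    using p q d unfolding qp[symmetric] by (simp add: field_simps)
  finally show ?thesis unfolding e1 e2 qp .
qed



lemma norm_shift_ge:
  fixes \<alpha> :: complex
  assumes "2 * norm \<alpha> \<le> real n"
  shows "real n / 2 \<le> norm (of_nat n + \<alpha>)"
proof -
  have "norm (of_nat n :: complex) - norm \<alpha> \<le> norm (of_nat n + \<alpha>)"
    by (rule norm_diff_ineq)
  thus ?thesis using assms by simp
qed

lemma summable_diff_inv:
  fixes \<alpha> \<beta> :: complex
  shows "summable (\<lambda>n. norm (1 / (of_nat n + \<alpha>) - 1 / (of_nat n + \<beta>)))"
proof (rule summable_comparison_test_ev)
  define C where "C = 4 * norm (\<beta> - \<alpha>)"
  show "summable (\<lambda>n. C * inverse (real n ^ 2))"
    by (intro summable_mult inverse_power_summable) simp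
  have ev: "eventually (\<lambda>n. 2 * norm \<alpha> + 2 * norm \<beta> + 1 \<le> real n) sequentially"
  proof -
    have "eventually (\<lambda>n. nat \<lceil>2 * norm \<alpha> + 2 * norm \<beta> + 1\<rceil> \<le> n) sequentially"
      by (rule eventually_ge_at_top)
    thus ?thesis by eventually_elim linarith
  qed
  show "eventually (\<lambda>n. norm (norm (1 / (of_nat n + \<alpha>) - 1 / (of_nat n + \<beta>))) \<le> C * inverse (real n ^ 2)) sequentially"
    using ev
  proof eventually_elim
    case (elim n)
    have n1: "real n \<ge> 1" using elim by (smt (verit) norm_ge_zero)
    have a: "real n / 2 \<le> norm (of_nat n + \<alpha>)" by (rule norm_shift_ge) (use elim in \<open>smt (verit) norm_ge_zero\<close>)
    have b: "real n / 2 \<le> norm (of_nat n + \<beta>)" by (rule norm_shift_ge) (use elim in \<open>smt (verit) norm_ge_zero\<close>)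
    have a0: "of_nat n + \<alpha> \<noteq> 0" and b0: "of_nat n + \<beta> \<noteq> 0" using a b n1 by auto
    have "1 / (of_nat n + \<alpha>) - 1 / (of_nat n + \<beta>) = (\<beta> - \<alpha>) / ((of_nat n + \<alpha>) * (of_nat n + \<beta>))"
      using a0 b0 by (simp add: field_simps)
    hence "norm (1 / (of_nat n + \<alpha>) - 1 / (of_nat n + \<beta>)) = norm (\<beta> - \<alpha>) / (norm (of_nat n + \<alpha>) * norm (of_nat n + \<beta>))"
      by (simp add: norm_divide norm_mult)
    also have "\<dots> \<le> norm (\<beta> - \<alpha>) / ((real n / 2) * (real n / 2))"
    proof -
      have pa: "0 < norm (of_nat n + \<alpha>)" and pb: "0 < norm (of_nat n + \<beta>)" using a b n1 by linarith+
      have "(real n / 2) * (real n / 2) \<le> norm (of_nat n + \<alpha>) * norm (of_nat n + \<beta>)"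
        using a b n1 by (intro mult_mono) auto
      moreover have "0 < (real n / 2) * (real n / 2)" using n1 by simp
      ultimately show ?thesis by (intro divide_left_mono) (auto intro: mult_pos_pos)
    qed
    also have "\<dots> = C * inverse (real n ^ 2)" by (simp add: C_def field_simps power2_eq_square)
    finally show ?case by simp
  qed
qed


lemma final_alg:
  fixes K p ca sa cg sg :: complex
  assumes pa: "sa^2 + ca^2 = 1" and pg: "sg^2 + cg^2 = 1"
    and n1: "ca*cg - sa* sg \<noteq> 0" and n2: "ca*cg + sa* sg \<noteq> 0"
  shows "K * (p / (ca*cg - sa* sg) - p / (ca*cg + sa* sg))
       = p * (4 * K) * (sa * sg / ((1 - 2 * sg^2) + (2 * ca^2 - 1)))"
proof -
  have E: "(ca*cg - sa* sg) * (ca*cg + sa* sg) = ca^2 - sg^2"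
  proof -
    have "(ca*cg - sa* sg) * (ca*cg + sa* sg) = ca^2 * cg^2 - sa^2 * sg^2" by (simp add: algebra_simps power2_eq_square)
    also have "\<dots> = ca^2 * (1 - sg^2) - (1 - ca^2) * sg^2"
    proof -
      have "cg^2 = 1 - sg^2" "sa^2 = 1 - ca^2" using pa pg by (simp_all add: algebra_simps eq_diff_eq)
      thus ?thesis by simp
    qed
    also have "\<dots> = ca^2 - sg^2" by (simp add: algebra_simps)
    finally show ?thesis .
  qed
  have En: "ca^2 - sg^2 \<noteq> 0" using n1 n2 E by (metis no_zero_divisors)
  have "K * (p / (ca*cg - sa* sg) - p / (ca*cg + sa* sg)) = K * p * (2 * sa * sg) / ((ca*cg - sa* sg) * (ca*cg + sa* sg))"
    using n1 n2 by (simp add: field_simps)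
  also have "\<dots> = K * p * (2 * sa * sg) / (ca^2 - sg^2)" by (simp only: E)
  also have "(1 - 2 * sg^2) + (2 * ca^2 - 1) = 2 * (ca^2 - sg^2)" by (simp add: algebra_simps)
  hence "p * (4 * K) * (sa * sg / ((1 - 2 * sg^2) + (2 * ca^2 - 1))) = K * p * (2 * sa * sg) / (ca^2 - sg^2)"
    using En by (simp add: field_simps)
  ultimately show ?thesis by simp
qed

theorem mainTheorem3:
  fixes a b c :: complex
  assumes "a \<noteq> 0" and "c \<noteq> 0"
    and "Re b > 0" and "Re (b + a + c) > 0" and "Re (b + a - c) > 0"
    and "Re (b - a + c) > 0" and "Re (b - a - c) > 0"
    and "\<forall>k::int. (a + c) / b \<noteq> of_int (2 * k + 1)"
    and "\<forall>k::int. (a - c) / b \<noteq> of_int (2 * k + 1)"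
    and "\<forall>m::nat. 1 + (1/2 - (a + c) / (2 * b)) \<noteq> - of_nat m"
    and "\<forall>m::nat. 1 + (1/2 - (a - c) / (2 * b)) \<noteq> - of_nat m"
    and "\<forall>m::nat. 1 + (1/2 + (a + c) / (2 * b)) \<noteq> - of_nat m"
    and "\<forall>m::nat. 1 + (1/2 + (a - c) / (2 * b)) \<noteq> - of_nat m"
  shows "let \<tau>1 = 1/2 - (a + c) / (2 * b); \<tau>2 = 1/2 - (a - c) / (2 * b);
             \<tau>3 = 1/2 + (a + c) / (2 * b); \<tau>4 = 1/2 + (a - c) / (2 * b);
             Q = (b - a - c) * (b + a + c) * (b - a + c) * (b + a - c)
         in hypergeomF [1, 3/2, \<tau>1, \<tau>2, \<tau>3, \<tau>4] [1/2, 1 + \<tau>1, 1 + \<tau>2, 1 + \<tau>3, 1 + \<tau>4] (-1)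
            = of_real pi * Q / (4 * a * c * b^2) *
              (sin (a * of_real pi / (2 * b)) * sin (c * of_real pi / (2 * b))
               / (cos (c * of_real pi / b) + cos (a * of_real pi / b)))"
proof -
  define u where "u = 1/2 - (a + c) / (2 * b)"
  define v where "v = 1/2 - (a - c) / (2 * b)"
  have b0: "b \<noteq> 0" using assms(3) by auto
  have t3: "1/2 + (a + c) / (2 * b) = 1 - u" by (simp add: u_def)
  have t4: "1/2 + (a - c) / (2 * b) = 1 - v" by (simp add: v_def)
  have Xu: "(a + c) / b = 1 - 2 * u" using b0 by (simp add: u_def field_simps)
  have Yv: "(a - c) / b = 1 - 2 * v" using b0 by (simp add: v_def field_simps)
  have u: "u \<notin> \<int>"
  proof
    assume "u \<in> \<int>" then obtain m where m: "u = of_int m" by (rule Ints_cases)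
    have "(a + c) / b = of_int (2 * (- m) + 1)" unfolding Xu m by simp
    with assms(8) show False by blast
  qed
  have u1: "1 - u \<notin> \<int>"
  proof
    assume "1 - u \<in> \<int>" then obtain m where m: "1 - u = of_int m" by (rule Ints_cases)
    hence "u = 1 - of_int m" by (simp add: algebra_simps)
    hence "(a + c) / b = of_int (2 * (m - 1) + 1)" unfolding Xu by simp
    with assms(8) show False by blast
  qed
  have v: "v \<notin> \<int>"
  proof
    assume "v \<in> \<int>" then obtain m where m: "v = of_int m" by (rule Ints_cases)
    have "(a - c) / b = of_int (2 * (- m) + 1)" unfolding Yv m by simp
    with assms(9) show False by blast
  qed
  have v1: "1 - v \<notin> \<int>"
  proof
    assume "1 - v \<in> \<int>" then obtain m where m: "1 - v = of_int m" by (rule Ints_cases)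
    hence "v = 1 - of_int m" by (simp add: algebra_simps)
    hence "(a - c) / b = of_int (2 * (m - 1) + 1)" unfolding Yv by simp
    with assms(9) show False by blast
  qed
  define \<delta> where "\<delta> = v * (1 - v) - u * (1 - u)"
  have \<delta>eq: "\<delta> = a * c / b^2"
    unfolding \<delta>_def u_def v_def using b0 by (simp add: field_simps) (simp add: algebra_simps power2_eq_square)
  have \<delta>0: "\<delta> \<noteq> 0" using \<delta>eq assms(1,2) b0 by simp
  define K where "K = u * (1 - u) * v * (1 - v) / \<delta>"
  define F where "F N = K * ((1 / (N + u) + 1 / (N + (1 - u))) - (1 / (N + v) + 1 / (N + (1 - v))))" for N :: complex
  define T where "T n = (-1) ^ n * F (of_nat n)" for n :: nat
  have termT: "(\<Prod>\<alpha>\<leftarrow>[1, 3/2, u, v, 1 - u, 1 - v]. pochhammer \<alpha> n)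
          / (\<Prod>\<beta>\<leftarrow>[1/2, 1 + u, 1 + v, 1 + (1 - u), 1 + (1 - v)]. pochhammer \<beta> n) * (-1) ^ n / fact n
        = T n" for n
  proof -
    have "(\<Prod>\<alpha>\<leftarrow>[1, 3/2, u, v, 1 - u, 1 - v]. pochhammer \<alpha> n)
          / (\<Prod>\<beta>\<leftarrow>[1/2, 1 + u, 1 + v, 1 + (1 - u), 1 + (1 - v)]. pochhammer \<beta> n) * (-1) ^ n / fact n
     = (-1) ^ n * (2 * of_nat n + 1) * (u / (u + of_nat n)) * (v / (v + of_nat n))
         * ((1 - u) / ((1 - u) + of_nat n)) * ((1 - v) / ((1 - v) + of_nat n))"
      by (rule term_eq[OF u v u1 v1])
    also have "\<dots> = K * (-1) ^ n * ((1 / (of_nat n + u) + 1 / (of_nat n + (1 - u)))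
                 - (1 / (of_nat n + v) + 1 / (of_nat n + (1 - v))))"
      unfolding K_def \<delta>_def
      by (rule pf_eq) (use notInt_add_nat[OF u] notInt_add_nat[OF v] notInt_add_nat[OF u1] notInt_add_nat[OF v1] \<delta>0 \<delta>_def in auto)
    also have "\<dots> = T n" by (simp add: T_def F_def)
    finally show ?thesis .
  qed
  have summT: "summable T"
  proof (rule summable_comparison_test)
    show "summable (\<lambda>n. norm K * (norm (1 / (of_nat n + u) - 1 / (of_nat n + v))
                   + norm (1 / (of_nat n + (1 - u)) - 1 / (of_nat n + (1 - v)))))"
      by (intro summable_mult summable_add summable_diff_inv)
    show "\<exists>N. \<forall>n\<ge>N. norm (T n) \<le> norm K * (norm (1 / (of_nat n + u) - 1 / (of_nat n + v))
                   + norm (1 / (of_nat n + (1 - u)) - 1 / (of_nat n + (1 - v))))"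
    proof (intro exI allI impI)
      fix n :: nat
      have "T n = (-1) ^ n * K * ((1 / (of_nat n + u) - 1 / (of_nat n + v))
                   + (1 / (of_nat n + (1 - u)) - 1 / (of_nat n + (1 - v))))"
        by (simp add: T_def F_def algebra_simps)
      hence "norm (T n) = norm K * norm ((1 / (of_nat n + u) - 1 / (of_nat n + v))
                   + (1 / (of_nat n + (1 - u)) - 1 / (of_nat n + (1 - v))))"
        by (simp add: norm_mult norm_power)
      also have "\<dots> \<le> norm K * (norm (1 / (of_nat n + u) - 1 / (of_nat n + v))
                   + norm (1 / (of_nat n + (1 - u)) - 1 / (of_nat n + (1 - v))))"
        by (intro mult_left_mono norm_triangle_ineq) simp
      finally show "norm (T n) \<le> norm K * (norm (1 / (of_nat n + u) - 1 / (of_nat n + v))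
                   + norm (1 / (of_nat n + (1 - u)) - 1 / (of_nat n + (1 - v))))" .
    qed
  qed
  define Gf where "Gf w k = (1 / (2 * of_nat k + w) - 1 / (2 * of_nat k + 1 + w))
              + (1 / (2 * of_nat k + (1 - w)) - 1 / (2 * of_nat k + 1 + (1 - w)))" for w :: complex and k :: nat
  have grp: "(\<lambda>k. sum T {k * 2 ..< k * 2 + 2}) sums suminf T"
    by (rule sums_group[OF summable_sums[OF summT]]) simp
  have grp_eq: "sum T {k * 2 ..< k * 2 + 2} = K * (Gf u k - Gf v k)" for k
  proof -
    have "sum T {k * 2 ..< k * 2 + 2} = T (2 * k) + T (2 * k + 1)"
      by (simp add: numeral_2_eq_2 mult.commute)
    also have "\<dots> = F (2 * of_nat k) - F (2 * of_nat k + 1)"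
      by (simp add: T_def add.commute)
    also have "\<dots> = K * (Gf u k - Gf v k)"
      by (simp add: F_def Gf_def algebra_simps)
    finally show ?thesis .
  qed
  have S: "(\<lambda>k. K * (Gf u k - Gf v k)) sums (K * (of_real pi / sin (of_real pi * u) - of_real pi / sin (of_real pi * v)))"
    unfolding Gf_def by (intro sums_mult sums_diff G_sums u v)
  have sumval: "suminf T = K * (of_real pi / sin (of_real pi * u) - of_real pi / sin (of_real pi * v))"
    using sums_unique2[OF grp S[folded grp_eq]] .
  have lhs: "hypergeomF [1, 3/2, 1/2 - (a + c) / (2 * b), 1/2 - (a - c) / (2 * b),
             1/2 + (a + c) / (2 * b), 1/2 + (a - c) / (2 * b)]
             [1/2, 1 + (1/2 - (a + c) / (2 * b)), 1 + (1/2 - (a - c) / (2 * b)),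
              1 + (1/2 + (a + c) / (2 * b)), 1 + (1/2 + (a - c) / (2 * b))] (-1) = suminf T"
    unfolding hypergeomF_def t3 t4 u_def[symmetric] v_def[symmetric] using termT by simp
  define al where "al = a * of_real pi / (2 * b)"
  define ga where "ga = c * of_real pi / (2 * b)"
  have hpi: "sin (of_real (pi / 2) :: complex) = 1" "cos (of_real (pi / 2) :: complex) = 0"
    by (simp_all add: sin_of_real[symmetric] cos_of_real[symmetric])
  have pu: "of_real pi * u = of_real (pi / 2) - (al + ga)"
    unfolding u_def al_def ga_def using b0 by (simp add: field_simps)
  have pv: "of_real pi * v = of_real (pi / 2) - (al - ga)"
    unfolding v_def al_def ga_def using b0 by (simp add: field_simps)
  have su: "sin (of_real pi * u) = cos al * cos ga - sin al * sin ga"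
    unfolding pu by (simp add: sin_diff hpi cos_add)
  have sv: "sin (of_real pi * v) = cos al * cos ga + sin al * sin ga"
    unfolding pv by (simp add: sin_diff hpi cos_diff)
  have n1: "cos al * cos ga - sin al * sin ga \<noteq> 0" unfolding su[symmetric] using u by (subst sin_eq_0) auto
  have n2: "cos al * cos ga + sin al * sin ga \<noteq> 0" unfolding sv[symmetric] using v by (subst sin_eq_0) auto
  have cc: "cos (c * of_real pi / b) = 1 - 2 * sin ga ^ 2"
  proof -
    have "c * of_real pi / b = 2 * ga" unfolding ga_def using b0 by (simp add: field_simps)
    thus ?thesis by (simp add: cos_double_sin)
  qed
  have ca: "cos (a * of_real pi / b) = 2 * cos al ^ 2 - 1"
  proof -
    have "a * of_real pi / b = 2 * al" unfolding al_def using b0 by (simp add: field_simps)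
    thus ?thesis by (simp add: cos_double_cos)
  qed
  have Kval: "of_real pi * ((b - a - c) * (b + a + c) * (b - a + c) * (b + a - c)) / (4 * a * c * b^2)
      = of_real pi * (4 * K)"
  proof -
    have "u * (1 - u) * v * (1 - v) = (b - a - c) * (b + a + c) * (b - a + c) * (b + a - c) / (16 * b^4)"
      unfolding u_def v_def using b0 by (simp add: field_simps) (simp add: algebra_simps power4_eq_xxxx)
    note P = this
    have "K = (b - a - c) * (b + a + c) * (b - a + c) * (b + a - c) / (16 * a * c * b^2)"
      unfolding K_def P \<delta>eq using b0 assms(1,2) by (simp add: field_simps power2_eq_square power4_eq_xxxx)
    thus ?thesis by (simp add: mult_ac)
  qed
  have "K * (of_real pi / sin (of_real pi * u) - of_real pi / sin (of_real pi * v))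
      = of_real pi * (4 * K) * (sin al * sin ga / ((1 - 2 * sin ga ^ 2) + (2 * cos al ^ 2 - 1)))"
    unfolding su sv by (rule final_alg[OF sin_cos_squared_add sin_cos_squared_add n1 n2])
  thus ?thesis
    unfolding Let_def lhs sumval cc ca Kval[symmetric] al_def[symmetric] ga_def[symmetric] by simp
qed

end
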